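(* In the quantum LOCAL model, the subgraph state construction problem can be solved in $2$ rounds: on any network $G=(V,E)$ where each node $u\in V$ receives a bit $c_u\in\{0,1\}$, there is a $2$-round quantum LOCAL algorithm at the end of which the graph state of the induced subgraph $G'=(V',E')$ of $G$ on $V'=\{v\in V: c_v=1\}$ is shared by the nodes of $V'$, each node $v\in V'$ holding the one-qubit register $\mathsf{Q}_v$ of that graph state.
   Context: Quantum LOCAL model: the network is an undirected unweighted graph; each node is a quantum processor with a distinct identifier, initially knowing only its incident edges and the number of nodes. Computation proceeds in synchronous rounds; in each round each node performs arbitrary local quantum operations and sends one quantum message (any number of qubits) together with classical information to each neighbour. Initially no entanglement or randomness is shared. Graph state of a graph $G'=(V',E')$: take one-qubit registers $\mathsf{Q}_u$, $u\in V'$, initialized to $\bigotimes_{u}|0\rangle_{\mathsf{Q}_u}$, apply the Hadamard gate $\mathrm{H}=\frac{1}{\sqrt2}\begin{pmatrix}1&1\\1&-1\end{pmatrix}$ to each register, then for each edge $\{u,v\}\in E'$ apply the controlled-$Z$ gate $\mathrm{CZ}=\mathrm{diag}(1,1,1,-1)$ to $(\mathsf{Q}_u,\mathsf{Q}_v)$. *)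

theory Defs
  imports Complex_Main
begin

(* A qubit is labelled by (creating node, local index). *)
type_synonym qubit = "nat \<times> nat"
(* computational basis states: a bit for every qubit (all but finitely many are 0) *)
type_synonym basis = "qubit \<Rightarrow> bool"
(* (unnormalised) pure states: amplitude of each basis state *)
type_synonym qvec = "basis \<Rightarrow> complex"
(* operator acting on a set S of qubits: matrix entry  K b a  = <b|K|a>,
   with a, b assignments of the qubits in S *)
type_synonym qop = "basis \<Rightarrow> basis \<Rightarrow> complex"

definition restr :: "qubit set \<Rightarrow> basis \<Rightarrow> basis" where
  "restr S b = (\<lambda>q. q \<in> S \<and> b q)"

definition ovr :: "qubit set \<Rightarrow> basis \<Rightarrow> basis \<Rightarrow> basis" where
  "ovr S b a = (\<lambda>q. if q \<in> S then a q else b q)"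

definition assigns :: "qubit set \<Rightarrow> basis set" where
  "assigns S = {a. \<forall>q. a q \<longrightarrow> q \<in> S}"

record init_view =
  nid   :: nat
  nbrs  :: "nat set"
  nsize :: nat
  inp   :: bool

(* a message: classical part (encoded as a natural number) and the set of qubits sent *)
type_synonym msg = "nat \<times> qubit set"

(* history of a node, newest round first: (measurement outcome of the local
   operation of that round, messages received from each node in that round) *)
type_synonym hist = "(nat \<times> (nat \<Rightarrow> msg)) list"

type_synonym view = "init_view \<times> hist"

(* Each node u creates nq qubits (u,0),...,(u,nq-1),
   all initialised to |0>.  In every round it applies a quantum instrument
   (Kraus operators kraus w k, outcomes k in outs w) to the qubits it currently
   holds, where w is its current view; then, depending on its view and the
   outcome, sends to each neighbour a classical message and a set of qubits.
   After the last round it applies one more local instrument and designates an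
   output qubit. *)
record qalg =
  nq     :: "init_view \<Rightarrow> nat"
  outs   :: "view \<Rightarrow> nat set"
  kraus  :: "view \<Rightarrow> nat \<Rightarrow> qop"
  send   :: "view \<Rightarrow> nat \<Rightarrow> nat \<Rightarrow> msg"
  outq   :: "view \<Rightarrow> nat \<Rightarrow> qubit"

(* qubits held by a node, as determined by its own view *)
fun owned :: "qalg \<Rightarrow> init_view \<Rightarrow> hist \<Rightarrow> qubit set" where
  "owned A iv [] = {(nid iv, i) | i. i < nq A iv}"
| "owned A iv ((k, rcv) # hs) =
     (owned A iv hs - (\<Union>v. snd (send A (iv, hs) k v))) \<union> (\<Union>v. snd (rcv v))"

definition valid_alg :: "qalg \<Rightarrow> bool" where
  "valid_alg A \<longleftrightarrow>
    (\<forall>iv hs. finite (outs A (iv, hs)) \<and>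
      (finite (owned A iv hs) \<longrightarrow>
        (\<forall>a\<in>assigns (owned A iv hs). \<forall>a'\<in>assigns (owned A iv hs).
           (\<Sum>k\<in>outs A (iv, hs). \<Sum>b\<in>assigns (owned A iv hs).
               cnj (kraus A (iv, hs) k b a) * kraus A (iv, hs) k b a')
           = (if a = a' then 1 else 0))) \<and>
      (\<forall>k v. snd (send A (iv, hs) k v) \<subseteq> owned A iv hs \<and>
             (v \<notin> nbrs iv \<longrightarrow> snd (send A (iv, hs) k v) = {})) \<and>
      (\<forall>k v v'. v \<noteq> v' \<longrightarrow> snd (send A (iv, hs) k v) \<inter> snd (send A (iv, hs) k v') = {}))"

(* finite simple undirected graph on vertex set V (vertices = identifiers) *)
definition simple_graph :: "nat set \<Rightarrow> nat set set \<Rightarrow> bool" where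
  "simple_graph V E \<longleftrightarrow> finite V \<and>
     (\<forall>e\<in>E. \<exists>u v. e = {u, v} \<and> u \<noteq> v \<and> u \<in> V \<and> v \<in> V)"

definition nb :: "nat set set \<Rightarrow> nat \<Rightarrow> nat set" where
  "nb E u = {v. {u, v} \<in> E}"

definition iview :: "nat set \<Rightarrow> nat set set \<Rightarrow> (nat \<Rightarrow> bool) \<Rightarrow> nat \<Rightarrow> init_view" where
  "iview V E c u = \<lparr>nid = u, nbrs = nb E u, nsize = card V, inp = c u\<rparr>"

(* simultaneous application of the local operators K u on the (disjoint) qubit sets S u *)
definition apply_ops :: "nat set \<Rightarrow> (nat \<Rightarrow> qubit set) \<Rightarrow> (nat \<Rightarrow> qop) \<Rightarrow> qvec \<Rightarrow> qvec" where
  "apply_ops V S K \<psi> = (\<lambda>b. \<Sum>a\<in>assigns (\<Union>u\<in>V. S u).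
       (\<Prod>u\<in>V. K u (restr (S u) b) (restr (S u) a)) * \<psi> (ovr (\<Union>u\<in>V. S u) b a))"

(* execution along the outcome branch \<omega> (\<omega> r u = outcome of node u in step r):
   after r steps, the histories of all nodes and the unnormalised global state *)
fun run :: "qalg \<Rightarrow> nat set \<Rightarrow> nat set set \<Rightarrow> (nat \<Rightarrow> bool) \<Rightarrow> (nat \<Rightarrow> nat \<Rightarrow> nat)
            \<Rightarrow> nat \<Rightarrow> (nat \<Rightarrow> hist) \<times> qvec" where
  "run A V E c \<omega> 0 = ((\<lambda>u. []), (\<lambda>b. if b = (\<lambda>_. False) then 1 else 0))"
| "run A V E c \<omega> (Suc r) =
     (let H = fst (run A V E c \<omega> r); \<psi> = snd (run A V E c \<omega> r);
          w = (\<lambda>u. (iview V E c u, H u));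
          \<psi>' = apply_ops V (\<lambda>u. owned A (iview V E c u) (H u)) (\<lambda>u. kraus A (w u) (\<omega> r u)) \<psi>;
          H' = (\<lambda>u. (\<omega> r u, (\<lambda>v. if v \<in> V \<and> v \<in> nb E u then send A (w v) (\<omega> r v) u else (0, {}))) # H u)
      in (H', \<psi>'))"

(* amplitude of basis state x (on the vertices V') in the graph state of (V',E'):
   H^{\<otimes>V'} then CZ on every edge *)
definition graph_state_amp :: "nat set \<Rightarrow> nat set set \<Rightarrow> (nat \<Rightarrow> bool) \<Rightarrow> complex" where
  "graph_state_amp V' E' x =
     complex_of_real ((1 / sqrt 2) ^ card V' * (-1) ^ card {e\<in>E'. \<forall>v\<in>e. x v})"

definition solves_subgraph_state :: "qalg \<Rightarrow> nat \<Rightarrow> bool" where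
  "solves_subgraph_state A R \<longleftrightarrow>
    (\<forall>V E c \<omega>. simple_graph V E \<and>
       (\<forall>r\<le>R. \<forall>u\<in>V. \<omega> r u \<in> outs A (iview V E c u, fst (run A V E c \<omega> r) u)) \<longrightarrow>
       (let V' = {v\<in>V. c v}; E' = {e\<in>E. e \<subseteq> V'};
            q = (\<lambda>v. outq A (iview V E c v, fst (run A V E c \<omega> R) v) (\<omega> R v));
            \<psi> = snd (run A V E c \<omega> (Suc R))
        in inj_on q V' \<and>
           (\<forall>v\<in>V'. q v \<in> owned A (iview V E c v) (fst (run A V E c \<omega> R) v)) \<and>
           (\<exists>\<phi>. \<forall>b. \<psi> b = graph_state_amp V' E' (\<lambda>v. b (q v)) * \<phi> (\<lambda>p. p \<notin> q ` V' \<and> b p))))"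

end

theory Submission
  imports Defs "HOL-Library.Countable_Set"
begin

definition nqf :: "init_view \<Rightarrow> nat" where
  "nqf iv = Suc (Suc (Max (insert 0 (nbrs iv))))"
definition O0 :: "init_view \<Rightarrow> qubit set" where
  "O0 iv = {(nid iv, i) | i. i < nqf iv}"
definition code :: "init_view \<Rightarrow> basis \<Rightarrow> nat" where
  "code iv = to_nat_on (assigns (O0 iv))"
definition T0 :: "init_view \<Rightarrow> qubit set" where
  "T0 iv = {(nid iv, 0)} \<union> {(nid iv, Suc v) | v. v \<in> nbrs iv \<and> nid iv < v \<and> Suc v < nqf iv}"
definition prep :: "init_view \<Rightarrow> basis \<Rightarrow> complex" where
  "prep iv b = (if inp iv then (if b = (\<lambda>_. False) \<or> b = (\<lambda>p. p \<in> T0 iv) then complex_of_real (1 / sqrt 2) else 0)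
                else (if b = (\<lambda>_. False) then 1 else 0))"
definition outsf :: "view \<Rightarrow> nat set" where
  "outsf w = (if snd w = [] then code (fst w) ` assigns (O0 (fst w)) else {0})"
definition sendf :: "view \<Rightarrow> nat \<Rightarrow> nat \<Rightarrow> msg" where
  "sendf w k x = (0, (case snd w of
      [] \<Rightarrow> (if inp (fst w) \<and> nid (fst w) < x \<and> x \<in> nbrs (fst w) \<and> Suc x < nqf (fst w) then {(nid (fst w), Suc x)} else {})
    | [(k0, rcv)] \<Rightarrow> (if x \<in> nbrs (fst w) then {p \<in> snd (rcv x). fst p = x} else {})
    | _ \<Rightarrow> {}))"
definition A0 :: qalg where
  "A0 = \<lparr>nq = nqf, outs = outsf, kraus = (\<lambda>_ _ _ _. 0), send = sendf, outq = (\<lambda>_ _. (0,0))\<rparr>"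
definition rcvd :: "hist \<Rightarrow> qubit set" where
  "rcvd hs = (case hs of [] \<Rightarrow> {} | (k, rcv) # _ \<Rightarrow> (\<Union>v. snd (rcv v)))"
definition dph :: "init_view \<Rightarrow> hist \<Rightarrow> basis \<Rightarrow> complex" where
  "dph iv hs a = (if inp iv \<and> a (nid iv, 0) then (-1) ^ card {p \<in> rcvd hs. a p} else 1)"
definition flipset :: "init_view \<Rightarrow> hist \<Rightarrow> qubit set" where
  "flipset iv hs = {p \<in> owned A0 iv hs. inp iv \<and> fst p = nid iv \<and> snd p \<noteq> 0 \<and> snd p - 1 \<in> nbrs iv \<and> nid iv < snd p - 1}"
definition perm :: "init_view \<Rightarrow> hist \<Rightarrow> basis \<Rightarrow> basis" where
  "perm iv hs a = (\<lambda>p. if p \<in> flipset iv hs then a p \<noteq> a (nid iv, 0) else a p)"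
definition krausf :: "view \<Rightarrow> nat \<Rightarrow> qop" where
  "krausf w k b a = (if length (snd w) = 0 then (if code (fst w) a = k then prep (fst w) b else 0)
     else if length (snd w) = 1 then (if b = a then dph (fst w) (snd w) a else 0)
     else if length (snd w) = 2 then (if b = perm (fst w) (snd w) a then 1 else 0)
     else (if b = a then 1 else 0))"
definition Alg :: qalg where
  "Alg = \<lparr>nq = nqf, outs = outsf, kraus = krausf, send = sendf, outq = (\<lambda>w _. (nid (fst w), 0))\<rparr>"

lemma owned_Alg: "owned Alg iv hs = owned A0 iv hs"
  by (induction hs) (auto simp: Alg_def A0_def)

lemma finite_O0[simp]: "finite (O0 iv)"
  unfolding O0_def by simp

lemma finite_assigns: "finite S \<Longrightarrow> finite (assigns S)"
proof -
  assume "finite S"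
  have "inj_on (\<lambda>a. {q. a q}) (assigns S)" by (auto simp: inj_on_def)
  moreover have "(\<lambda>a. {q. a q}) ` assigns S \<subseteq> Pow S" by (auto simp: assigns_def)
  ultimately show ?thesis using \<open>finite S\<close>
    by (meson finite_Pow_iff inj_on_finite)
qed

lemma zero_assigns[simp]: "(\<lambda>_. False) \<in> assigns S" by (simp add: assigns_def)

lemma monomial_complete:
  assumes "finite S" "\<And>a. a \<in> assigns S \<Longrightarrow> \<pi> a \<in> assigns S" "inj_on \<pi> (assigns S)"
    "\<And>a. a \<in> assigns S \<Longrightarrow> cnj (d a) * d a = 1"
    "a \<in> assigns S" "a' \<in> assigns S"
  shows "(\<Sum>b\<in>assigns S. cnj (if b = \<pi> a then d a else 0) * (if b = \<pi> a' then d a' else 0))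
         = (if a = a' then 1 else 0)"
proof -
  have "(\<Sum>b\<in>assigns S. cnj (if b = \<pi> a then d a else 0) * (if b = \<pi> a' then d a' else 0))
      = (\<Sum>b\<in>assigns S. if b = \<pi> a then (if \<pi> a = \<pi> a' then cnj (d a) * d a' else 0) else 0)"
    by (rule sum.cong) auto
  also have "\<dots> = (if \<pi> a = \<pi> a' then cnj (d a) * d a' else 0)"
    using assms by (simp add: sum.delta' finite_assigns)
  also have "\<dots> = (if a = a' then 1 else 0)"
    using assms by (auto dest: inj_onD)
  finally show ?thesis .
qed

lemma sq_half: "(complex_of_real (1 / sqrt 2))\<^sup>2 = complex_of_real (1/2)"
  by (simp flip: of_real_power add: power_divide)

lemma prep_complete:
  assumes "finite S" "b0 \<in> assigns S" "b1 \<in> assigns S" "b0 \<noteq> b1"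
  shows "(\<Sum>b\<in>assigns S. cnj (if b = b0 \<or> b = b1 then complex_of_real (1 / sqrt 2) else 0) *
               (if b = b0 \<or> b = b1 then complex_of_real (1 / sqrt 2) else 0)) = 1"
proof -
  have "(\<Sum>b\<in>assigns S. cnj (if b = b0 \<or> b = b1 then complex_of_real (1 / sqrt 2) else 0) *
               (if b = b0 \<or> b = b1 then complex_of_real (1 / sqrt 2) else 0))
     = (\<Sum>b\<in>{b0,b1}. complex_of_real (1/2))"
    apply (rule sum.mono_neutral_cong_right)
    using assms by (auto simp: finite_assigns power2_eq_square[symmetric] sq_half simp del: of_real_divide)
  also have "\<dots> = 1" using assms by simp
  finally show ?thesis .
qed

lemma owned_nil: "owned Alg iv [] = O0 iv"
  by (simp add: Alg_def O0_def)

lemma T0_sub: "T0 iv \<subseteq> O0 iv"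
  by (auto simp: T0_def O0_def nqf_def)

lemma prep_norm:
  "(\<Sum>b\<in>assigns (O0 iv). cnj (prep iv b) * prep iv b) = 1"
proof (cases "inp iv")
  case True
  have ne: "(\<lambda>_. False) \<noteq> (\<lambda>p. p \<in> T0 iv)"
    by (auto simp: T0_def fun_eq_iff)
  have "(\<lambda>p. p \<in> T0 iv) \<in> assigns (O0 iv)" using T0_sub by (auto simp: assigns_def)
  moreover have "\<And>b. prep iv b = (if b = (\<lambda>_. False) \<or> b = (\<lambda>p. p \<in> T0 iv) then complex_of_real (1 / sqrt 2) else 0)"
    using True by (simp add: prep_def)
  ultimately show ?thesis using prep_complete[OF finite_O0 zero_assigns _ ne]
    by (simp only:)
next
  case False
  have "(\<Sum>b\<in>assigns (O0 iv). cnj (prep iv b) * prep iv b)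
      = (\<Sum>b\<in>assigns (O0 iv). if b = (\<lambda>_. False) then 1 else 0)"
    by (rule sum.cong) (auto simp: prep_def False)
  then show ?thesis by (simp add: finite_assigns)
qed

lemma complete0:
  assumes "a \<in> assigns (O0 iv)" "a' \<in> assigns (O0 iv)"
  shows "(\<Sum>k\<in>code iv ` assigns (O0 iv). \<Sum>b\<in>assigns (O0 iv).
     cnj (if code iv a = k then prep iv b else 0) * (if code iv a' = k then prep iv b else 0))
    = (if a = a' then 1 else 0)"
proof -
  have inj: "inj_on (code iv) (assigns (O0 iv))"
    unfolding code_def by (intro inj_on_to_nat_on countable_finite finite_assigns finite_O0)
  have "(\<Sum>k\<in>code iv ` assigns (O0 iv). \<Sum>b\<in>assigns (O0 iv).
     cnj (if code iv a = k then prep iv b else 0) * (if code iv a' = k then prep iv b else 0))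
    = (\<Sum>k\<in>code iv ` assigns (O0 iv). if code iv a = k then (if code iv a' = k then 1 else 0) else 0)"
    by (rule sum.cong) (auto simp: prep_norm)
  also have "\<dots> = (if code iv a' = code iv a then 1 else 0)"
    using assms by (simp add: sum.delta finite_assigns)
  also have "\<dots> = (if a = a' then 1 else 0)"
    using assms inj by (auto dest: inj_onD)
  finally show ?thesis .
qed

lemma dph_norm: "cnj (dph iv hs a) * dph iv hs a = 1"
  by (simp add: dph_def power_mult_distrib[symmetric])

lemma perm_assigns: "a \<in> assigns (owned A0 iv hs) \<Longrightarrow> perm iv hs a \<in> assigns (owned A0 iv hs)"
  by (auto simp: perm_def assigns_def flipset_def)

lemma perm_invol: "perm iv hs (perm iv hs a) = a"
  by (auto simp: perm_def flipset_def fun_eq_iff)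

lemma kraus_nil: "kraus Alg (iv, []) k b a = (if code iv a = k then prep iv b else 0)"
  by (simp add: Alg_def krausf_def)
lemma outs_nil: "outs Alg (iv, []) = code iv ` assigns (O0 iv)"
  by (simp add: Alg_def outsf_def)

lemma kraus_1: "length hs = 1 \<Longrightarrow> kraus Alg (iv, hs) k b a = (if b = a then dph iv hs a else 0)"
  by (simp add: Alg_def krausf_def)
lemma kraus_2: "length hs = 2 \<Longrightarrow> kraus Alg (iv, hs) k b a = (if b = perm iv hs a then 1 else 0)"
  by (simp add: Alg_def krausf_def)
lemma kraus_3: "length hs \<noteq> 0 \<Longrightarrow> length hs \<noteq> 1 \<Longrightarrow> length hs \<noteq> 2 \<Longrightarrow>
   kraus Alg (iv, hs) k b a = (if b = a then 1 else 0)"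
  by (simp add: Alg_def krausf_def)
lemma outs_cons: "length hs \<noteq> 0 \<Longrightarrow> outs Alg (iv, hs) = {0}"
  by (simp add: Alg_def outsf_def)

lemma send_sub: "snd (sendf (iv, hs) k v) \<subseteq> owned A0 iv hs"
proof (cases hs rule: remdups_adj.cases)
  case 1
  then show ?thesis by (auto simp: sendf_def A0_def)
next
  case (2 x)
  then show ?thesis by (cases x) (auto simp: sendf_def)
next
  case (3 x y xs)
  then show ?thesis by (simp add: sendf_def)
qed

lemma valid: "valid_alg Alg"
  unfolding valid_alg_def
proof (intro allI conjI impI ballI)
  fix iv hs
  show "finite (outs Alg (iv, hs))" by (simp add: Alg_def outsf_def finite_assigns)
next
  fix iv hs a a'
  assume fin: "finite (owned Alg iv hs)" and a: "a \<in> assigns (owned Alg iv hs)"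
     and a': "a' \<in> assigns (owned Alg iv hs)"
  show "(\<Sum>k\<in>outs Alg (iv, hs). \<Sum>b\<in>assigns (owned Alg iv hs).
               cnj (kraus Alg (iv, hs) k b a) * kraus Alg (iv, hs) k b a')
           = (if a = a' then 1 else 0)"
  proof (cases "length hs = 0")
    case True
    then have "hs = []" by simp
    then show ?thesis using complete0[of a iv a'] a a'
      by (simp only: owned_nil kraus_nil outs_nil)
  next
    case l0: False
    show ?thesis
    proof (cases "length hs = 1")
      case True
      then show ?thesis using l0 monomial_complete[OF fin, of id "dph iv hs" a a'] a a' dph_norm
        by (simp only: kraus_1 outs_cons[OF l0]) simp
    next
      case l1: False
      show ?thesis
      proof (cases "length hs = 2")
        case True
        have inj: "inj_on (perm iv hs) (assigns (owned Alg iv hs))"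
          by (metis inj_on_inverseI perm_invol)
        show ?thesis using l0 l1 True monomial_complete[OF fin, of "perm iv hs" "\<lambda>_. 1" a a'] a a' inj
          perm_assigns by (simp only: kraus_2 outs_cons[OF l0] owned_Alg) simp
      next
        case False
        then show ?thesis using l0 l1 monomial_complete[OF fin, of id "\<lambda>_. 1" a a'] a a'
          by (simp only: kraus_3[OF l0 l1 False] outs_cons[OF l0]) simp
      qed
    qed
  qed
next
  fix iv :: init_view and hs :: hist and k v :: nat
  show "snd (send Alg (iv, hs) k v) \<subseteq> owned Alg iv hs"
    unfolding owned_Alg using send_sub by (simp add: Alg_def)
next
  fix iv :: init_view and hs :: hist and k v :: nat
  assume "v \<notin> nbrs iv"
  then show "snd (send Alg (iv, hs) k v) = {}"
    by (simp add: Alg_def sendf_def split: list.split)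
next
  fix iv :: init_view and hs :: hist and k v v' :: nat
  assume "v \<noteq> v'"
  then show "snd (send Alg (iv, hs) k v) \<inter> snd (send Alg (iv, hs) k v') = {}"
    by (auto simp add: Alg_def sendf_def split: list.split)
qed

lemma restr_zero[simp]: "restr S (\<lambda>_. False) = (\<lambda>_. False)"
  by (simp add: restr_def)

lemma restr_in_assigns[simp]: "restr S b \<in> assigns S"
  by (simp add: restr_def assigns_def)

lemma prod_if_zero:
  assumes "finite V"
  shows "(\<Prod>u\<in>V. if P u then f u else (0::complex)) = (if \<forall>u\<in>V. P u then \<Prod>u\<in>V. f u else 0)"
  using assms by (induction V rule: finite_induct) auto

lemma assigns_ext:
  assumes "a \<in> assigns (\<Union>u\<in>V. S u)" "a' \<in> assigns (\<Union>u\<in>V. S u)"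
    "\<forall>u\<in>V. restr (S u) a = restr (S u) a'"
  shows "a = a'"
proof
  fix p
  show "a p = a' p"
  proof (cases "\<exists>u\<in>V. p \<in> S u")
    case True
    then obtain u where "u \<in> V" "p \<in> S u" by blast
    then have "restr (S u) a p = restr (S u) a' p" using assms(3) by simp
    then show ?thesis using \<open>p \<in> S u\<close> by (simp add: restr_def)
  next
    case False
    then show ?thesis using assms(1,2) unfolding assigns_def mem_Collect_eq by blast
  qed
qed

lemma finite_U: "finite V \<Longrightarrow> \<forall>u\<in>V. finite (S u) \<Longrightarrow> finite (assigns (\<Union>u\<in>V. S u))"
  by (intro finite_assigns) auto

lemma apply_init:
  assumes "finite V" "\<forall>u\<in>V. finite (S u)"
  shows "apply_ops V S K (\<lambda>b. if b = (\<lambda>_. False) then 1 else 0) b =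
    (if (\<forall>p. b p \<longrightarrow> p \<in> (\<Union>u\<in>V. S u)) then (\<Prod>u\<in>V. K u (restr (S u) b) (\<lambda>_. False)) else 0)"
proof -
  let ?U = "\<Union>u\<in>V. S u"
  have "apply_ops V S K (\<lambda>b. if b = (\<lambda>_. False) then 1 else 0) b =
    (\<Sum>a\<in>assigns ?U. if a = (\<lambda>_. False) then
       (if (\<forall>p. b p \<longrightarrow> p \<in> ?U) then (\<Prod>u\<in>V. K u (restr (S u) b) (\<lambda>_. False)) else 0) else 0)"
    unfolding apply_ops_def
  proof (rule sum.cong)
    fix a assume a: "a \<in> assigns ?U"
    have "(ovr ?U b a = (\<lambda>_. False)) = (a = (\<lambda>_. False) \<and> (\<forall>p. b p \<longrightarrow> p \<in> ?U))"
    proof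
      assume h: "ovr ?U b a = (\<lambda>_. False)"
      have h': "\<And>p. \<not> (if p \<in> ?U then a p else b p)" using fun_cong[OF h] by (simp add: ovr_def)
      have "a = (\<lambda>_. False)"
      proof
        fix p
        have "a p \<longrightarrow> p \<in> ?U" using a unfolding assigns_def mem_Collect_eq by blast
        then show "a p = False" using h'[of p] by (cases "p \<in> ?U") auto
      qed
      moreover have "\<forall>p. b p \<longrightarrow> p \<in> ?U" using h' by (metis (full_types))
      ultimately show "a = (\<lambda>_. False) \<and> (\<forall>p. b p \<longrightarrow> p \<in> ?U)" by blast
    next
      assume h: "a = (\<lambda>_. False) \<and> (\<forall>p. b p \<longrightarrow> p \<in> ?U)"
      show "ovr ?U b a = (\<lambda>_. False)"
      proof
        fix p
        have "b p \<longrightarrow> p \<in> ?U" using h by blast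
        then show "ovr ?U b a p = False" using h by (auto simp add: ovr_def)
      qed
    qed
    then show "(\<Prod>u\<in>V. K u (restr (S u) b) (restr (S u) a)) *
        (if ovr ?U b a = (\<lambda>_. False) then 1 else 0) =
      (if a = (\<lambda>_. False) then
       (if (\<forall>p. b p \<longrightarrow> p \<in> ?U) then (\<Prod>u\<in>V. K u (restr (S u) b) (\<lambda>_. False)) else 0) else 0)"
      by auto
  qed simp
  also have "\<dots> = (if (\<forall>p. b p \<longrightarrow> p \<in> ?U) then (\<Prod>u\<in>V. K u (restr (S u) b) (\<lambda>_. False)) else 0)"
    using finite_U[OF assms] by (simp add: sum.delta')
  finally show ?thesis .
qed

lemma apply_diag:
  assumes "finite V" "\<forall>u\<in>V. finite (S u)"
    "\<And>u b a. u \<in> V \<Longrightarrow> K u b a = (if b = a then d u a else 0)"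
  shows "apply_ops V S K \<psi> b = (\<Prod>u\<in>V. d u (restr (S u) b)) * \<psi> b"
proof -
  let ?U = "\<Union>u\<in>V. S u"
  have "apply_ops V S K \<psi> b =
    (\<Sum>a\<in>assigns ?U. if a = restr ?U b then (\<Prod>u\<in>V. d u (restr (S u) b)) * \<psi> b else 0)"
    unfolding apply_ops_def
  proof (rule sum.cong)
    fix a assume a: "a \<in> assigns ?U"
    have eq: "(\<forall>u\<in>V. restr (S u) b = restr (S u) a) = (a = restr ?U b)"
    proof
      assume "\<forall>u\<in>V. restr (S u) b = restr (S u) a"
      then show "a = restr ?U b"
        by (intro assigns_ext[OF a restr_in_assigns]) (auto simp: restr_def fun_eq_iff)
    next
      assume "a = restr ?U b"
      then show "\<forall>u\<in>V. restr (S u) b = restr (S u) a" by (auto simp: restr_def fun_eq_iff)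
    qed
    have ov: "ovr ?U b (restr ?U b) = b" by (auto simp: ovr_def restr_def fun_eq_iff)
    have "(\<Prod>u\<in>V. K u (restr (S u) b) (restr (S u) a)) =
       (\<Prod>u\<in>V. if restr (S u) b = restr (S u) a then d u (restr (S u) b) else 0)"
      using assms(3) by (intro prod.cong) auto
    also have "\<dots> = (if a = restr ?U b then (\<Prod>u\<in>V. d u (restr (S u) b)) else 0)"
      using assms(1) eq by (simp add: prod_if_zero)
    finally show "(\<Prod>u\<in>V. K u (restr (S u) b) (restr (S u) a)) * \<psi> (ovr ?U b a) =
       (if a = restr ?U b then (\<Prod>u\<in>V. d u (restr (S u) b)) * \<psi> b else 0)"
      using ov by auto
  qed simp
  also have "\<dots> = (\<Prod>u\<in>V. d u (restr (S u) b)) * \<psi> b"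
    using finite_U[OF assms(1,2)] by (simp add: sum.delta')
  finally show ?thesis .
qed

lemma apply_invol:
  assumes "finite V" "\<forall>u\<in>V. finite (S u)"
    "\<And>u b a. u \<in> V \<Longrightarrow> K u b a = (if b = \<pi> u a then 1 else 0)"
    "\<And>u a. u \<in> V \<Longrightarrow> a \<in> assigns (S u) \<Longrightarrow> \<pi> u (\<pi> u a) = a"
    "fb \<in> assigns (\<Union>u\<in>V. S u)" "\<forall>u\<in>V. restr (S u) fb = \<pi> u (restr (S u) b)"
  shows "apply_ops V S K \<psi> b = \<psi> (ovr (\<Union>u\<in>V. S u) b fb)"
proof -
  let ?U = "\<Union>u\<in>V. S u"
  have "apply_ops V S K \<psi> b =
    (\<Sum>a\<in>assigns ?U. if a = fb then \<psi> (ovr ?U b fb) else 0)"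
    unfolding apply_ops_def
  proof (rule sum.cong)
    fix a assume a: "a \<in> assigns ?U"
    have eq: "(\<forall>u\<in>V. restr (S u) b = \<pi> u (restr (S u) a)) = (a = fb)"
    proof
      assume h: "\<forall>u\<in>V. restr (S u) b = \<pi> u (restr (S u) a)"
      show "a = fb"
      proof (intro assigns_ext[OF a assms(5)] ballI)
        fix u assume u: "u \<in> V"
        have "restr (S u) a = \<pi> u (\<pi> u (restr (S u) a))" using assms(4)[OF u] by simp
        also have "\<dots> = \<pi> u (restr (S u) b)" using h u by simp
        also have "\<dots> = restr (S u) fb" using assms(6) u by simp
        finally show "restr (S u) a = restr (S u) fb" .
      qed
    next
      assume "a = fb"
      then show "\<forall>u\<in>V. restr (S u) b = \<pi> u (restr (S u) a)"
        using assms(4,6) by simp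
    qed
    have "(\<Prod>u\<in>V. K u (restr (S u) b) (restr (S u) a)) =
       (\<Prod>u\<in>V. if restr (S u) b = \<pi> u (restr (S u) a) then 1 else 0)"
      using assms(3) by (intro prod.cong) auto
    also have "\<dots> = (if a = fb then 1 else 0)"
      using assms(1) eq by (simp add: prod_if_zero)
    finally show "(\<Prod>u\<in>V. K u (restr (S u) b) (restr (S u) a)) * \<psi> (ovr ?U b a) =
       (if a = fb then \<psi> (ovr ?U b fb) else 0)"
      by auto
  qed simp
  also have "\<dots> = \<psi> (ovr ?U b fb)"
    using finite_U[OF assms(1,2)] assms(5) by (simp add: sum.delta')
  finally show ?thesis .
qed

lemma run_Suc_fst: "fst (run A V E c \<omega> (Suc r)) = (\<lambda>u. (\<omega> r u, \<lambda>v. if v \<in> V \<and> v \<in> nb E u then send A (iview V E c v, fst (run A V E c \<omega> r) v) (\<omega> r v) u else (0, {})) # fst (run A V E c \<omega> r) u)"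
  by (simp add: Let_def)

lemma run_Suc_snd: "snd (run A V E c \<omega> (Suc r)) = apply_ops V (\<lambda>u. owned A (iview V E c u) (fst (run A V E c \<omega> r) u))
   (\<lambda>u. kraus A (iview V E c u, fst (run A V E c \<omega> r) u) (\<omega> r u)) (snd (run A V E c \<omega> r))"
  by (simp add: Let_def)

lemma send_Alg: "send Alg = sendf" by (simp add: Alg_def)

lemma iview_simps[simp]: "nid (iview V E c u) = u" "nbrs (iview V E c u) = nb E u" "inp (iview V E c u) = c u"
  by (simp_all add: iview_def)

lemma O0_mem: "p \<in> O0 iv \<longleftrightarrow> fst p = nid iv \<and> snd p < nqf iv"
  by (cases p) (auto simp: O0_def)

definition Gf :: "nat set \<Rightarrow> nat set set \<Rightarrow> (nat \<Rightarrow> bool) \<Rightarrow> basis \<Rightarrow> basis" where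
  "Gf V E c b = (\<lambda>p. \<exists>u\<in>V. c u \<and> b (u, 0) \<and> p \<in> T0 (iview V E c u))"
definition kap :: "nat set \<Rightarrow> (nat \<Rightarrow> bool) \<Rightarrow> complex" where
  "kap V c = complex_of_real ((1 / sqrt 2) ^ card {v\<in>V. c v})"
definition good0 :: "nat set \<Rightarrow> nat set set \<Rightarrow> (nat \<Rightarrow> bool) \<Rightarrow> (nat \<Rightarrow> nat \<Rightarrow> nat) \<Rightarrow> bool" where
  "good0 V E c \<omega> = (\<forall>u\<in>V. code (iview V E c u) (\<lambda>_. False) = \<omega> 0 u)"
definition Pc :: "init_view \<Rightarrow> basis \<Rightarrow> bool" where
  "Pc iv x = (if inp iv then x = (\<lambda>_. False) \<or> x = (\<lambda>p. p \<in> T0 iv) else x = (\<lambda>_. False))"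
definition wt :: "init_view \<Rightarrow> complex" where
  "wt iv = (if inp iv then complex_of_real (1 / sqrt 2) else 1)"

lemma if3_lemma: "(A \<and> B \<longleftrightarrow> C) \<Longrightarrow> (if A then (if g then (if B then k else 0) else 0) else 0) = (if g \<and> C then k else (0::complex))"
  by auto

lemma prep_alt: "prep iv x = (if Pc iv x then wt iv else 0)"
  by (simp add: prep_def Pc_def wt_def)

lemma prod_wt: "finite V \<Longrightarrow> (\<Prod>u\<in>V. wt (iview V E c u)) = kap V c"
proof -
  assume f: "finite V"
  have "(\<Prod>u\<in>V. wt (iview V E c u)) = (\<Prod>u\<in>V. if c u then complex_of_real (1 / sqrt 2) else 1)"
    by (simp add: wt_def)
  also have "\<dots> = (\<Prod>u\<in>{v\<in>V. c v}. complex_of_real (1 / sqrt 2))"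
    by (rule prod.inter_filter[OF f, symmetric])
  also have "\<dots> = kap V c" by (simp add: kap_def of_real_power)
  finally show ?thesis .
qed

lemma restr_eq_zero: "restr S b = (\<lambda>_. False) \<longleftrightarrow> (\<forall>p\<in>S. \<not> b p)"
  by (auto simp: restr_def fun_eq_iff)

lemma restr_eq_ind: "T \<subseteq> S \<Longrightarrow> restr S b = (\<lambda>p. p \<in> T) \<longleftrightarrow> (\<forall>p\<in>S. b p = (p \<in> T))"
  by (auto simp: restr_def fun_eq_iff)

lemma apply_ops_cong: "(\<And>u. u \<in> V \<Longrightarrow> S u = S' u) \<Longrightarrow> apply_ops V S K \<psi> = apply_ops V S' K \<psi>"
proof -
  assume h: "\<And>u. u \<in> V \<Longrightarrow> S u = S' u"
  have "(\<Union>u\<in>V. S u) = (\<Union>u\<in>V. S' u)" using h by auto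
  moreover have "\<And>a b. (\<Prod>u\<in>V. K u (restr (S u) b) (restr (S u) a)) = (\<Prod>u\<in>V. K u (restr (S' u) b) (restr (S' u) a))"
    using h by (intro prod.cong) auto
  ultimately show ?thesis unfolding apply_ops_def by simp
qed

definition FL :: "nat set \<Rightarrow> nat set set \<Rightarrow> (nat \<Rightarrow> bool) \<Rightarrow> qubit set" where
  "FL V E c = {(a, j). a \<in> V \<and> c a \<and> j \<noteq> 0 \<and> j - 1 \<in> nb E a \<and> a < j - 1}"

declare owned.simps[simp del] run.simps[simp del]

context
  fixes V :: "nat set" and E :: "nat set set" and c :: "nat \<Rightarrow> bool"
  assumes G: "simple_graph V E"
begin

lemma finV: "finite V" using G by (simp add: simple_graph_def)

lemma nb_sub: "nb E u \<subseteq> V"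
proof
  fix v assume "v \<in> nb E u"
  then have "{u, v} \<in> E" by (simp add: nb_def)
  then obtain x y where "{u, v} = {x, y}" "x \<in> V" "y \<in> V" using G by (auto simp: simple_graph_def)
  then show "v \<in> V" by (auto simp: doubleton_eq_iff)
qed

lemma nb_fin: "finite (nb E u)" using nb_sub finV finite_subset by blast

lemma nb_sym: "v \<in> nb E u \<longleftrightarrow> u \<in> nb E v"
  by (simp add: nb_def insert_commute)

lemma nb_irr: "u \<notin> nb E u"
proof
  assume "u \<in> nb E u"
  then have "{u} \<in> E" by (simp add: nb_def)
  then obtain x y where eq: "{u} = {x, y}" and "x \<noteq> y" using G by (auto simp: simple_graph_def)
  have "x \<in> {u}" "y \<in> {u}" by (simp_all add: eq)
  then show False using \<open>x \<noteq> y\<close> by simp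
qed

lemma nq_big: "v \<in> nb E u \<Longrightarrow> Suc v < nqf (iview V E c u)"
  using nb_fin[of u] by (simp add: nqf_def le_imp_less_Suc)

lemma T0_mem: "u \<in> V \<Longrightarrow> p \<in> T0 (iview V E c u) \<longleftrightarrow> p = (u, 0) \<or> (\<exists>v. p = (u, Suc v) \<and> v \<in> nb E u \<and> u < v)"
  using nq_big by (auto simp: T0_def)

lemma O0_T0: "(u, 0) \<in> T0 (iview V E c u)" by (simp add: T0_def)

lemma T0_O0: "p \<in> T0 (iview V E c u) \<Longrightarrow> p \<in> O0 (iview V E c u)"
  using T0_sub by blast

lemma T0_fst: "p \<in> T0 (iview V E c u) \<Longrightarrow> fst p = u"
  using T0_O0 O0_mem by auto

lemma cond_equiv:
  "((\<forall>p. b p \<longrightarrow> p \<in> (\<Union>u\<in>V. O0 (iview V E c u))) \<and> (\<forall>u\<in>V. Pc (iview V E c u) (restr (O0 (iview V E c u)) b)))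
   \<longleftrightarrow> b = Gf V E c b"
proof
  assume h: "(\<forall>p. b p \<longrightarrow> p \<in> (\<Union>u\<in>V. O0 (iview V E c u))) \<and> (\<forall>u\<in>V. Pc (iview V E c u) (restr (O0 (iview V E c u)) b))"
  show "b = Gf V E c b"
  proof
    fix p
    show "b p = Gf V E c b p"
    proof
      assume bp: "b p"
      then obtain u where u: "u \<in> V" "p \<in> O0 (iview V E c u)" using h by blast
      have pc: "Pc (iview V E c u) (restr (O0 (iview V E c u)) b)" using h u by blast
      show "Gf V E c b p"
      proof (cases "c u")
        case True
        have "\<not> restr (O0 (iview V E c u)) b = (\<lambda>_. False)" using bp u by (auto simp: restr_eq_zero)
        then have "restr (O0 (iview V E c u)) b = (\<lambda>p. p \<in> T0 (iview V E c u))" using pc True by (simp add: Pc_def)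
        then have hh: "\<forall>q\<in>O0 (iview V E c u). b q = (q \<in> T0 (iview V E c u))" using T0_sub by (simp add: restr_eq_ind)
        have "p \<in> T0 (iview V E c u)" using hh u bp by blast
        moreover have "b (u, 0)" using hh O0_T0 T0_O0 by blast
        ultimately show ?thesis using u True by (auto simp: Gf_def)
      next
        case False
        then have "restr (O0 (iview V E c u)) b = (\<lambda>_. False)" using pc by (simp add: Pc_def)
        then show ?thesis using bp u by (auto simp: restr_eq_zero)
      qed
    next
      assume "Gf V E c b p"
      then obtain u where u: "u \<in> V" "c u" "b (u, 0)" "p \<in> T0 (iview V E c u)" by (auto simp: Gf_def)
      have pc: "Pc (iview V E c u) (restr (O0 (iview V E c u)) b)" using h u by blast
      have "\<not> restr (O0 (iview V E c u)) b = (\<lambda>_. False)" using u O0_T0 T0_O0 by (auto simp: restr_eq_zero)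
      then have "restr (O0 (iview V E c u)) b = (\<lambda>p. p \<in> T0 (iview V E c u))" using pc u by (simp add: Pc_def)
      then have hh: "\<forall>q\<in>O0 (iview V E c u). b q = (q \<in> T0 (iview V E c u))" using T0_sub by (simp add: restr_eq_ind)
      then show "b p" using u T0_O0 by blast
    qed
  qed
next
  assume e: "b = Gf V E c b"
  have bp: "b p \<longleftrightarrow> (\<exists>u\<in>V. c u \<and> b (u, 0) \<and> p \<in> T0 (iview V E c u))" for p
    by (subst e) (simp add: Gf_def)
  have "\<forall>p. b p \<longrightarrow> p \<in> (\<Union>u\<in>V. O0 (iview V E c u))" using bp T0_O0 by blast
  moreover have "Pc (iview V E c u) (restr (O0 (iview V E c u)) b)" if u: "u \<in> V" for u
  proof -
    have own: "w = u" if "p \<in> O0 (iview V E c u)" "p \<in> T0 (iview V E c w)" for p w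
      using that T0_fst O0_mem by fastforce
    show ?thesis
    proof (cases "c u \<and> b (u, 0)")
      case True
      have "\<forall>q\<in>O0 (iview V E c u). b q = (q \<in> T0 (iview V E c u))"
        using bp own True u by blast
      then show ?thesis using True T0_sub by (simp add: Pc_def restr_eq_ind)
    next
      case False
      have "\<forall>q\<in>O0 (iview V E c u). \<not> b q"
        using bp own False by blast
      then show ?thesis by (simp add: Pc_def restr_eq_zero)
    qed
  qed
  ultimately show "(\<forall>p. b p \<longrightarrow> p \<in> (\<Union>u\<in>V. O0 (iview V E c u))) \<and> (\<forall>u\<in>V. Pc (iview V E c u) (restr (O0 (iview V E c u)) b))"
    by blast
qed

lemma H1: "fst (run Alg V E c \<omega> (Suc 0)) = (\<lambda>u. [(\<omega> 0 u, \<lambda>v. if v \<in> V \<and> v \<in> nb E u then sendf (iview V E c v, []) (\<omega> 0 v) u else (0, {}))])"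
  unfolding run_Suc_fst send_Alg run.simps by simp

lemma psi1: "snd (run Alg V E c \<omega> (Suc 0)) b = (if good0 V E c \<omega> \<and> b = Gf V E c b then kap V c else 0)"
proof -
  have "snd (run Alg V E c \<omega> (Suc 0)) = apply_ops V (\<lambda>u. O0 (iview V E c u)) (\<lambda>u. kraus Alg (iview V E c u, []) (\<omega> 0 u))
      (\<lambda>b. if b = (\<lambda>_. False) then 1 else 0)"
    by (simp only: run.simps Let_def fst_conv snd_conv owned_nil)
  moreover have "apply_ops V (\<lambda>u. O0 (iview V E c u)) (\<lambda>u. kraus Alg (iview V E c u, []) (\<omega> 0 u))
      (\<lambda>b. if b = (\<lambda>_. False) then 1 else 0) b =
    (if (\<forall>p. b p \<longrightarrow> p \<in> (\<Union>u\<in>V. O0 (iview V E c u))) then (\<Prod>u\<in>V. kraus Alg (iview V E c u, []) (\<omega> 0 u) (restr (O0 (iview V E c u)) b) (\<lambda>_. False)) else 0)"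
    by (rule apply_init[OF finV]) simp
  ultimately have "snd (run Alg V E c \<omega> (Suc 0)) b =
     (if (\<forall>p. b p \<longrightarrow> p \<in> (\<Union>u\<in>V. O0 (iview V E c u))) then
        (\<Prod>u\<in>V. if code (iview V E c u) (\<lambda>_. False) = \<omega> 0 u then
            (if Pc (iview V E c u) (restr (O0 (iview V E c u)) b) then wt (iview V E c u) else 0) else 0) else 0)"
    by (simp only: kraus_nil prep_alt)
  also have "\<dots> = (if (\<forall>p. b p \<longrightarrow> p \<in> (\<Union>u\<in>V. O0 (iview V E c u))) then
        (if good0 V E c \<omega> then
            (if (\<forall>u\<in>V. Pc (iview V E c u) (restr (O0 (iview V E c u)) b)) then kap V c else 0) else 0) else 0)"
    by (simp only: prod_if_zero[OF finV] prod_wt[OF finV] good0_def)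
  also have "\<dots> = (if good0 V E c \<omega> \<and> b = Gf V E c b then kap V c else 0)"
    by (rule if3_lemma[OF cond_equiv])
  finally show ?thesis .
qed

lemma edge_count:
  "(\<Sum>u\<in>V. if c u \<and> x u then card {v \<in> nb E u. c v \<and> v < u \<and> x v} else 0)
   = card {e \<in> {e \<in> E. e \<subseteq> {v \<in> V. c v}}. \<forall>v\<in>e. x v}"
proof -
  let ?A = "{u \<in> V. c u \<and> x u}"
  let ?B = "\<lambda>u. {v \<in> nb E u. c v \<and> v < u \<and> x v}"
  let ?R = "{e \<in> {e \<in> E. e \<subseteq> {v \<in> V. c v}}. \<forall>v\<in>e. x v}"
  have "(\<Sum>u\<in>V. if c u \<and> x u then card (?B u) else 0) = (\<Sum>u\<in>?A. card (?B u))"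
    using finV by (simp add: sum.inter_filter)
  also have "\<dots> = card (Sigma ?A ?B)"
    using finV nb_fin by (simp add: card_SigmaI)
  also have "\<dots> = card ?R"
  proof (rule bij_betw_same_card[of "\<lambda>(u, v). {u, v}"], rule bij_betwI')
    fix p q assume p: "p \<in> Sigma ?A ?B" and q: "q \<in> Sigma ?A ?B"
    obtain u v where pu: "p = (u, v)" by (cases p)
    obtain u' v' where qu: "q = (u', v')" by (cases q)
    have "v < u" "v' < u'" using p q pu qu by auto
    then show "((case p of (u, v) \<Rightarrow> {u, v}) = (case q of (u, v) \<Rightarrow> {u, v})) = (p = q)"
      using pu qu by (auto simp: doubleton_eq_iff)
  next
    fix p assume p: "p \<in> Sigma ?A ?B"
    obtain u v where pu: "p = (u, v)" by (cases p)
    have "v \<in> V" using p pu nb_sub by auto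
    then show "(case p of (u, v) \<Rightarrow> {u, v}) \<in> ?R"
      using p pu by (auto simp: nb_def)
  next
    fix e assume e: "e \<in> ?R"
    then obtain a b where ab: "e = {a, b}" "a \<noteq> b" "a \<in> V" "b \<in> V"
      using G by (auto simp: simple_graph_def)
    have eE: "e \<in> E" "e \<subseteq> {v \<in> V. c v}" "\<forall>v\<in>e. x v" using e by auto
    show "\<exists>p\<in>Sigma ?A ?B. e = (case p of (u, v) \<Rightarrow> {u, v})"
    proof (cases "b < a")
      case True
      have "b \<in> nb E a" using eE ab by (simp add: nb_def)
      then have "(a, b) \<in> Sigma ?A ?B" using True eE ab by auto
      then show ?thesis using ab by auto
    next
      case False
      then have lt: "a < b" using ab by simp
      have "a \<in> nb E b" using eE ab by (simp add: nb_def insert_commute)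
      then have "(b, a) \<in> Sigma ?A ?B" using lt eE ab by auto
      then show ?thesis using ab by (auto simp: insert_commute)
    qed
  qed
  finally show ?thesis .
qed

lemma rcv1_snd: "u \<in> V \<Longrightarrow> snd (if v \<in> V \<and> v \<in> nb E u then sendf (iview V E c v, []) k u else (0, {}))
   = (if v \<in> nb E u \<and> c v \<and> v < u then {(v, Suc u)} else {})"
  using nb_sub nb_sym[of v u] nq_big[of u v] by (auto simp: sendf_def)

lemma rcvd_H1: "u \<in> V \<Longrightarrow> rcvd (fst (run Alg V E c \<omega> (Suc 0)) u) = {(v, Suc u) | v. v \<in> nb E u \<and> c v \<and> v < u}"
  unfolding H1 rcvd_def using rcv1_snd by auto

lemma sent0: "(\<Union>w. snd (sendf (iview V E c u, []) k w)) = {(u, Suc w) | w. c u \<and> u < w \<and> w \<in> nb E u}"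
  using nq_big by (auto simp: sendf_def)

lemma owned1: "u \<in> V \<Longrightarrow> owned Alg (iview V E c u) (fst (run Alg V E c \<omega> (Suc 0)) u)
   = (O0 (iview V E c u) - {(u, Suc w) | w. c u \<and> u < w \<and> w \<in> nb E u}) \<union> {(v, Suc u) | v. v \<in> nb E u \<and> c v \<and> v < u}"
proof -
  assume u: "u \<in> V"
  have "owned Alg (iview V E c u) (fst (run Alg V E c \<omega> (Suc 0)) u) =
     (O0 (iview V E c u) - (\<Union>w. snd (sendf (iview V E c u, []) (\<omega> 0 u) w))) \<union> rcvd (fst (run Alg V E c \<omega> (Suc 0)) u)"
    unfolding H1 rcvd_def by (simp only: owned.simps(2) owned_nil send_Alg list.case prod.case)
  then show ?thesis using u by (simp only: rcvd_H1 sent0)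
qed

lemma owned1_fin: "u \<in> V \<Longrightarrow> finite (owned Alg (iview V E c u) (fst (run Alg V E c \<omega> (Suc 0)) u))"
proof -
  assume u: "u \<in> V"
  have "{(v, Suc u) | v. v \<in> nb E u \<and> c v \<and> v < u} \<subseteq> (\<lambda>v. (v, Suc u)) ` nb E u" by auto
  then have "finite {(v, Suc u) | v. v \<in> nb E u \<and> c v \<and> v < u}" using nb_fin finite_subset by blast
  then show ?thesis using u owned1 by simp
qed

lemma dph_eval:
  assumes u: "u \<in> V" and e: "b = Gf V E c b"
  shows "dph (iview V E c u) (fst (run Alg V E c \<omega> (Suc 0)) u) (restr (owned Alg (iview V E c u) (fst (run Alg V E c \<omega> (Suc 0)) u)) b)
    = (if c u \<and> b (u, 0) then (-1) ^ card {v \<in> nb E u. c v \<and> v < u \<and> b (v, 0)} else 1)"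
proof -
  let ?O = "owned Alg (iview V E c u) (fst (run Alg V E c \<omega> (Suc 0)) u)"
  have u0: "(u, 0) \<in> ?O" using u owned1 by (simp add: O0_def nqf_def)
  have rsub: "rcvd (fst (run Alg V E c \<omega> (Suc 0)) u) \<subseteq> ?O" using u owned1 rcvd_H1 by auto
  have bp: "b p \<longleftrightarrow> (\<exists>w\<in>V. c w \<and> b (w, 0) \<and> p \<in> T0 (iview V E c w))" for p
    by (subst e) (simp add: Gf_def)
  have bv: "b (v, Suc u) \<longleftrightarrow> c v \<and> b (v, 0)" if "v \<in> nb E u" "v < u" for v
  proof -
    have vV: "v \<in> V" using that nb_sub by auto
    have "(v, Suc u) \<in> T0 (iview V E c v)" using that nb_sym vV by (simp add: T0_mem)
    moreover have "w = v" if "(v, Suc u) \<in> T0 (iview V E c w)" for w using T0_fst[OF that] by simp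
    ultimately show ?thesis using bp[of "(v, Suc u)"] vV by blast
  qed
  have "{p \<in> rcvd (fst (run Alg V E c \<omega> (Suc 0)) u). restr ?O b p} = (\<lambda>v. (v, Suc u)) ` {v \<in> nb E u. c v \<and> v < u \<and> b (v, 0)}"
    using rsub u bv by (auto simp: rcvd_H1 restr_def)
  then have "card {p \<in> rcvd (fst (run Alg V E c \<omega> (Suc 0)) u). restr ?O b p} = card {v \<in> nb E u. c v \<and> v < u \<and> b (v, 0)}"
    by (simp add: card_image inj_on_def)
  moreover have "restr ?O b (u, 0) = b (u, 0)" using u0 by (simp add: restr_def)
  ultimately show ?thesis by (simp add: dph_def)
qed

lemma psi2: "snd (run Alg V E c \<omega> (Suc (Suc 0))) b =
   (if good0 V E c \<omega> \<and> b = Gf V E c b then (-1) ^ card {e \<in> {e \<in> E. e \<subseteq> {v \<in> V. c v}}. \<forall>v\<in>e. b (v, 0)} * kap V c else 0)"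
proof -
  let ?H = "fst (run Alg V E c \<omega> (Suc 0))"
  have "snd (run Alg V E c \<omega> (Suc (Suc 0))) b = apply_ops V (\<lambda>u. owned Alg (iview V E c u) (?H u))
   (\<lambda>u. kraus Alg (iview V E c u, ?H u) (\<omega> (Suc 0) u)) (snd (run Alg V E c \<omega> (Suc 0))) b"
    by (simp only: run_Suc_snd)
  also have "\<dots> = (\<Prod>u\<in>V. dph (iview V E c u) (?H u) (restr (owned Alg (iview V E c u) (?H u)) b)) * snd (run Alg V E c \<omega> (Suc 0)) b"
  proof (rule apply_diag[OF finV])
    show "\<forall>u\<in>V. finite (owned Alg (iview V E c u) (?H u))" using owned1_fin by blast
    fix u b a assume "u \<in> V"
    have "length (?H u) = 1" unfolding H1 by simp
    then show "kraus Alg (iview V E c u, ?H u) (\<omega> (Suc 0) u) b a = (if b = a then dph (iview V E c u) (?H u) a else 0)"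
      by (rule kraus_1)
  qed
  also have "\<dots> = (if good0 V E c \<omega> \<and> b = Gf V E c b then (-1) ^ card {e \<in> {e \<in> E. e \<subseteq> {v \<in> V. c v}}. \<forall>v\<in>e. b (v, 0)} * kap V c else 0)"
  proof (cases "good0 V E c \<omega> \<and> b = Gf V E c b")
    case True
    then have e: "b = Gf V E c b" by simp
    have "(\<Prod>u\<in>V. dph (iview V E c u) (?H u) (restr (owned Alg (iview V E c u) (?H u)) b))
       = (\<Prod>u\<in>V. (-1::complex) ^ (if c u \<and> b (u, 0) then card {v \<in> nb E u. c v \<and> v < u \<and> b (v, 0)} else 0))"
      by (rule prod.cong) (simp_all add: dph_eval[OF _ e])
    also have "\<dots> = (-1) ^ (\<Sum>u\<in>V. if c u \<and> b (u, 0) then card {v \<in> nb E u. c v \<and> v < u \<and> b (v, 0)} else 0)"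
      by (simp add: power_sum)
    also have "\<dots> = (-1) ^ card {e \<in> {e \<in> E. e \<subseteq> {v \<in> V. c v}}. \<forall>v\<in>e. b (v, 0)}"
      by (simp only: edge_count[of "\<lambda>v. b (v, 0)"])
    finally show ?thesis using True by (simp add: psi1)
  next
    case False
    have "snd (run Alg V E c \<omega> (Suc 0)) b = (if good0 V E c \<omega> \<and> b = Gf V E c b then kap V c else 0)"
      by (rule psi1)
    also have "\<dots> = 0" using False by (rule if_not_P)
    finally have "snd (run Alg V E c \<omega> (Suc 0)) b = 0" .
    then show ?thesis using False by auto
  qed
  finally show ?thesis .
qed



lemma H2: "fst (run Alg V E c \<omega> (Suc (Suc 0))) u = (\<omega> (Suc 0) u, \<lambda>v. if v \<in> V \<and> v \<in> nb E u then sendf (iview V E c v, fst (run Alg V E c \<omega> (Suc 0)) v) (\<omega> (Suc 0) v) u else (0, {})) # fst (run Alg V E c \<omega> (Suc 0)) u"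
  by (simp only: run_Suc_fst send_Alg)

lemma rcv2_snd: "u \<in> V \<Longrightarrow> snd (if v \<in> V \<and> v \<in> nb E u then sendf (iview V E c v, fst (run Alg V E c \<omega> (Suc 0)) v) k u else (0, {}))
   = (if v \<in> nb E u \<and> c u \<and> u < v then {(u, Suc v)} else {})"
proof (cases "v \<in> V \<and> v \<in> nb E u")
  case True
  then have "u \<in> nb E v" using nb_sym by blast
  then show ?thesis using True rcv1_snd[of v u] by (simp add: H1 sendf_def, auto)
next
  case False
  then show ?thesis using nb_sub by auto
qed

lemma sent1: "u \<in> V \<Longrightarrow> (\<Union>w. snd (sendf (iview V E c u, fst (run Alg V E c \<omega> (Suc 0)) u) k w)) = {(v, Suc u) | v. v \<in> nb E u \<and> c v \<and> v < u}"
proof -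
  assume u: "u \<in> V"
  have "snd (sendf (iview V E c u, fst (run Alg V E c \<omega> (Suc 0)) u) k w) = (if w \<in> nb E u \<and> c w \<and> w < u then {(w, Suc u)} else {})" for w
    using rcv1_snd[OF u, of w] nb_sym[of u w] nq_big[of u w] by (simp add: H1 sendf_def, auto)
  then show ?thesis by auto
qed

lemma owned2: "u \<in> V \<Longrightarrow> owned Alg (iview V E c u) (fst (run Alg V E c \<omega> (Suc (Suc 0))) u) = O0 (iview V E c u)"
proof -
  assume u: "u \<in> V"
  have "owned Alg (iview V E c u) (fst (run Alg V E c \<omega> (Suc (Suc 0))) u) =
    (owned Alg (iview V E c u) (fst (run Alg V E c \<omega> (Suc 0)) u) - (\<Union>w. snd (sendf (iview V E c u, fst (run Alg V E c \<omega> (Suc 0)) u) (\<omega> (Suc 0) u) w)))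
     \<union> (\<Union>v. snd (if v \<in> V \<and> v \<in> nb E u then sendf (iview V E c v, fst (run Alg V E c \<omega> (Suc 0)) v) (\<omega> (Suc 0) v) u else (0, {})))"
    by (simp only: H2 owned.simps(2) send_Alg)
  also have "\<dots> = ((O0 (iview V E c u) - {(u, Suc w) | w. c u \<and> u < w \<and> w \<in> nb E u}) \<union> {(v, Suc u) | v. v \<in> nb E u \<and> c v \<and> v < u})
      - {(v, Suc u) | v. v \<in> nb E u \<and> c v \<and> v < u} \<union> {(u, Suc v) | v. v \<in> nb E u \<and> c u \<and> u < v}"
    using u by (simp add: owned1 sent1 rcv2_snd) (auto split: if_splits)
  also have "\<dots> = O0 (iview V E c u)"
    using u nq_big by (auto simp: O0_mem)
  finally show ?thesis .
qed

lemma FL_sub: "p \<in> FL V E c \<Longrightarrow> p \<in> O0 (iview V E c (fst p)) \<and> fst p \<in> V"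
proof -
  assume h: "p \<in> FL V E c"
  obtain a j where p: "p = (a, j)" by (cases p)
  have h2: "a \<in> V" "j \<noteq> 0" "j - 1 \<in> nb E a" using h p by (auto simp: FL_def)
  then have "Suc (j - 1) < nqf (iview V E c a)" by (intro nq_big)
  then have "j < nqf (iview V E c a)" using h2 by simp
  then show ?thesis using p h2 by (simp add: O0_mem)
qed

lemma flipset2: "u \<in> V \<Longrightarrow> p \<in> O0 (iview V E c u) \<Longrightarrow>
    p \<in> flipset (iview V E c u) (fst (run Alg V E c \<omega> (Suc (Suc 0))) u) \<longleftrightarrow> p \<in> FL V E c"
  using owned2[of u] by (cases p) (auto simp: flipset_def FL_def owned_Alg[symmetric] O0_mem)

lemma Gf_cong: "(\<And>v. b (v, 0) = b' (v, 0)) \<Longrightarrow> Gf V E c b = Gf V E c b'"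
  by (simp add: Gf_def)

lemma flip_equiv:
  "((\<lambda>p. if p \<in> FL V E c then b p \<noteq> b (fst p, 0) else b p) = Gf V E c b) \<longleftrightarrow> (\<forall>p. b p \<longrightarrow> p \<in> {(v, 0) | v. v \<in> V \<and> c v})"
proof -
  have GfT: "Gf V E c b (a, j) \<longleftrightarrow> b (a, 0)" if F: "(a, j) \<in> FL V E c" for a j
  proof -
    have h: "a \<in> V" "c a" "j \<noteq> 0" "j - 1 \<in> nb E a" "a < j - 1" using F by (auto simp: FL_def)
    have e: "(a, j) = (a, Suc (j - 1))" using h(3) by simp
    have "(a, j) \<in> T0 (iview V E c a)" unfolding T0_mem[OF h(1)] using e h(4,5) by blast
    moreover have "w = a" if "(a, j) \<in> T0 (iview V E c w)" for w using T0_fst[OF that] by simp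
    ultimately show ?thesis using h(1,2) unfolding Gf_def by blast
  qed
  have GfF: "Gf V E c b (a, j) \<longleftrightarrow> (a \<in> V \<and> c a \<and> b (a, 0) \<and> j = 0)" if F: "(a, j) \<notin> FL V E c" for a j
  proof
    assume "Gf V E c b (a, j)"
    then obtain u where u: "u \<in> V" "c u" "b (u, 0)" "(a, j) \<in> T0 (iview V E c u)" unfolding Gf_def by blast
    then have d: "(a, j) = (u, 0) \<or> (\<exists>v. (a, j) = (u, Suc v) \<and> v \<in> nb E u \<and> u < v)" by (simp add: T0_mem)
    have "\<not> (\<exists>v. (a, j) = (u, Suc v) \<and> v \<in> nb E u \<and> u < v)"
    proof
      assume "\<exists>v. (a, j) = (u, Suc v) \<and> v \<in> nb E u \<and> u < v"
      then obtain v where "(a, j) = (u, Suc v)" "v \<in> nb E u" "u < v" by blast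
      then have "(a, j) \<in> FL V E c" using u by (simp add: FL_def)
      then show False using F by simp
    qed
    then have "(a, j) = (u, 0)" using d by blast
    then show "a \<in> V \<and> c a \<and> b (a, 0) \<and> j = 0" using u by simp
  next
    assume "a \<in> V \<and> c a \<and> b (a, 0) \<and> j = 0"
    then show "Gf V E c b (a, j)" unfolding Gf_def using O0_T0 by blast
  qed
  have FLj: "(a, j) \<in> FL V E c \<Longrightarrow> j \<noteq> 0" for a j by (simp add: FL_def)
  show ?thesis
  proof
    assume h: "(\<lambda>p. if p \<in> FL V E c then b p \<noteq> b (fst p, 0) else b p) = Gf V E c b"
    show "\<forall>p. b p \<longrightarrow> p \<in> {(v, 0) | v. v \<in> V \<and> c v}"
    proof (intro allI impI)
      fix p assume bp: "b p"
      obtain a j where p: "p = (a, j)" by (cases p)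
      have hp: "(if (a, j) \<in> FL V E c then b (a, j) \<noteq> b (a, 0) else b (a, j)) = Gf V E c b (a, j)"
        using fun_cong[OF h, of "(a, j)"] by (simp cong: if_cong)
      show "p \<in> {(v, 0) | v. v \<in> V \<and> c v}"
      proof (cases "(a, j) \<in> FL V E c")
        case True
        then have "(b (a, j) \<noteq> b (a, 0)) = b (a, 0)" using hp GfT[OF True] by simp
        then have "\<not> b (a, j)" by blast
        then show ?thesis using bp p by simp
      next
        case False
        then have "b (a, j) = (a \<in> V \<and> c a \<and> b (a, 0) \<and> j = 0)" using hp GfF[OF False] by simp
        then show ?thesis using bp p by simp
      qed
    qed
  next
    assume h: "\<forall>p. b p \<longrightarrow> p \<in> {(v, 0) | v. v \<in> V \<and> c v}"
    show "(\<lambda>p. if p \<in> FL V E c then b p \<noteq> b (fst p, 0) else b p) = Gf V E c b"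
    proof
      fix p :: qubit
      obtain a j where p: "p = (a, j)" by (cases p)
      have hb: "b (a, j) \<Longrightarrow> a \<in> V \<and> c a \<and> j = 0" using h by blast
      show "(if p \<in> FL V E c then b p \<noteq> b (fst p, 0) else b p) = Gf V E c b p"
      proof (cases "(a, j) \<in> FL V E c")
        case True
        then have "\<not> b (a, j)" using hb FLj by blast
        then show ?thesis using p True GfT[OF True] by simp
      next
        case False
        have "b (a, j) = (a \<in> V \<and> c a \<and> b (a, 0) \<and> j = 0)" using hb by auto
        then show ?thesis using p False GfF[OF False] by simp
      qed
    qed
  qed
qed

lemma psi3: "snd (run Alg V E c \<omega> (Suc (Suc (Suc 0)))) b =
   (if good0 V E c \<omega> \<and> (\<forall>p. b p \<longrightarrow> p \<in> {(v, 0) | v. v \<in> V \<and> c v})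
    then (-1) ^ card {e \<in> {e \<in> E. e \<subseteq> {v \<in> V. c v}}. \<forall>v\<in>e. b (v, 0)} * kap V c else 0)"
proof -
  let ?H = "fst (run Alg V E c \<omega> (Suc (Suc 0)))"
  let ?U = "\<Union>u\<in>V. O0 (iview V E c u)"
  let ?fb = "\<lambda>p. p \<in> ?U \<and> (if p \<in> FL V E c then b p \<noteq> b (fst p, 0) else b p)"
  let ?bs = "\<lambda>p. if p \<in> FL V E c then b p \<noteq> b (fst p, 0) else b p"
  have "snd (run Alg V E c \<omega> (Suc (Suc (Suc 0)))) b = apply_ops V (\<lambda>u. owned Alg (iview V E c u) (?H u))
   (\<lambda>u. kraus Alg (iview V E c u, ?H u) (\<omega> (Suc (Suc 0)) u)) (snd (run Alg V E c \<omega> (Suc (Suc 0)))) b"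
    by (simp only: run_Suc_snd)
  also have "\<dots> = apply_ops V (\<lambda>u. O0 (iview V E c u))
   (\<lambda>u. kraus Alg (iview V E c u, ?H u) (\<omega> (Suc (Suc 0)) u)) (snd (run Alg V E c \<omega> (Suc (Suc 0)))) b"
    by (rule fun_cong[OF apply_ops_cong]) (rule owned2)
  also have "\<dots> = snd (run Alg V E c \<omega> (Suc (Suc 0))) (ovr ?U b ?fb)"
  proof (rule apply_invol[OF finV])
    show "\<forall>u\<in>V. finite (O0 (iview V E c u))" by simp
    fix u b a assume "u \<in> V"
    have "length (?H u) = 2" by (simp add: H2 H1)
    then show "kraus Alg (iview V E c u, ?H u) (\<omega> (Suc (Suc 0)) u) b a = (if b = perm (iview V E c u) (?H u) a then 1 else 0)"
      by (rule kraus_2)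
  next
    fix u a show "perm (iview V E c u) (?H u) (perm (iview V E c u) (?H u) a) = a" by (rule perm_invol)
  next
    show "?fb \<in> assigns ?U" by (simp add: assigns_def)
  next
    show "\<forall>u\<in>V. restr (O0 (iview V E c u)) ?fb = perm (iview V E c u) (?H u) (restr (O0 (iview V E c u)) b)"
    proof
      fix u assume u: "u \<in> V"
      show "restr (O0 (iview V E c u)) ?fb = perm (iview V E c u) (?H u) (restr (O0 (iview V E c u)) b)"
      proof
        fix p
        show "restr (O0 (iview V E c u)) ?fb p = perm (iview V E c u) (?H u) (restr (O0 (iview V E c u)) b) p"
        proof (cases "p \<in> O0 (iview V E c u)")
          case True
          have u0: "(u, 0) \<in> O0 (iview V E c u)" by (simp add: O0_def nqf_def)
          have fp: "fst p = u" using True O0_mem by simp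
          show ?thesis using True flipset2[OF u True] u u0 fp
            by (auto simp: restr_def perm_def)
        next
          case False
          have "p \<notin> flipset (iview V E c u) (?H u)"
            using False owned2[OF u] by (auto simp: flipset_def owned_Alg[symmetric])
          then show ?thesis using False by (simp add: restr_def perm_def)
        qed
      qed
    qed
  qed
  also have "ovr ?U b ?fb = ?bs"
  proof
    fix p
    show "ovr ?U b ?fb p = ?bs p"
      using FL_sub[of p] by (auto simp: ovr_def)
  qed
  also have "snd (run Alg V E c \<omega> (Suc (Suc 0))) ?bs =
     (if good0 V E c \<omega> \<and> ?bs = Gf V E c ?bs then (-1) ^ card {e \<in> {e \<in> E. e \<subseteq> {v \<in> V. c v}}. \<forall>v\<in>e. ?bs (v, 0)} * kap V c else 0)"
    by (rule psi2)
  also have "\<dots> = (if good0 V E c \<omega> \<and> (\<forall>p. b p \<longrightarrow> p \<in> {(v, 0) | v. v \<in> V \<and> c v})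
    then (-1) ^ card {e \<in> {e \<in> E. e \<subseteq> {v \<in> V. c v}}. \<forall>v\<in>e. b (v, 0)} * kap V c else 0)"
  proof -
    have z: "?bs (v, 0) = b (v, 0)" for v by (simp add: FL_def)
    have Gfeq: "Gf V E c ?bs = Gf V E c b" by (rule Gf_cong) (rule z)
    have e1: "(?bs = Gf V E c ?bs) = (\<forall>p. b p \<longrightarrow> p \<in> {(v, 0) | v. v \<in> V \<and> c v})"
      by (simp only: Gfeq flip_equiv)
    have e2: "{e \<in> {e \<in> E. e \<subseteq> {v \<in> V. c v}}. \<forall>v\<in>e. ?bs (v, 0)} = {e \<in> {e \<in> E. e \<subseteq> {v \<in> V. c v}}. \<forall>v\<in>e. b (v, 0)}"
      by (simp only: z)
    show ?thesis by (simp only: e1 e2)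
  qed
  finally show ?thesis .
qed

end


lemma ifmul: "(if P then y else 0) = y * (if P then 1 else (0::complex))"
  by simp

theorem theorem3:
  shows "\<exists>A. valid_alg A \<and> solves_subgraph_state A 2"
proof (intro exI conjI)
  show "valid_alg Alg" by (rule valid)
  show "solves_subgraph_state Alg 2"
    unfolding solves_subgraph_state_def
  proof (intro allI impI)
    fix V E c \<omega>
    assume h: "simple_graph V E \<and> (\<forall>r\<le>2. \<forall>u\<in>V. \<omega> r u \<in> outs Alg (iview V E c u, fst (run Alg V E c \<omega> r) u))"
    then have G: "simple_graph V E" by blast
    have q: "outq Alg (iview V E c v, fst (run Alg V E c \<omega> 2) v) (\<omega> 2 v) = (v, 0)" for v
      by (simp add: Alg_def)
    have two: "(2::nat) = Suc (Suc 0)" by simp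
    have three: "Suc 2 = Suc (Suc (Suc 0))" by simp
    let ?Q = "{(v, 0::nat) | v. v \<in> V \<and> c v}"
    have img: "(\<lambda>v. (v, 0::nat)) ` {v \<in> V. c v} = ?Q" by auto
    have inj: "inj_on (\<lambda>v. (v, 0::nat)) {v \<in> V. c v}" by (simp add: inj_on_def)
    have own: "\<forall>v\<in>{v \<in> V. c v}. (v, 0) \<in> owned Alg (iview V E c v) (fst (run Alg V E c \<omega> 2) v)"
      using owned2[OF G] by (simp add: two O0_def nqf_def)
    let ?\<phi> = "\<lambda>z. if good0 V E c \<omega> \<and> z = (\<lambda>_. False) then (1::complex) else 0"
    have st: "\<forall>b. snd (run Alg V E c \<omega> (Suc 2)) b =
       graph_state_amp {v \<in> V. c v} {e \<in> E. e \<subseteq> {v \<in> V. c v}} (\<lambda>v. b (v, 0)) * ?\<phi> (\<lambda>p. p \<notin> ?Q \<and> b p)"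
    proof
      fix b :: basis
      have z: "((\<lambda>p. p \<notin> ?Q \<and> b p) = (\<lambda>_. False)) = (\<forall>p. b p \<longrightarrow> p \<in> ?Q)"
        by (auto simp: fun_eq_iff)
      have amp: "graph_state_amp {v \<in> V. c v} {e \<in> E. e \<subseteq> {v \<in> V. c v}} (\<lambda>v. b (v, 0))
          = (-1) ^ card {e \<in> {e \<in> E. e \<subseteq> {v \<in> V. c v}}. \<forall>v\<in>e. b (v, 0)} * kap V c"
        by (simp add: graph_state_amp_def kap_def)
      show "snd (run Alg V E c \<omega> (Suc 2)) b =
       graph_state_amp {v \<in> V. c v} {e \<in> E. e \<subseteq> {v \<in> V. c v}} (\<lambda>v. b (v, 0)) * ?\<phi> (\<lambda>p. p \<notin> ?Q \<and> b p)"
        unfolding three psi3[OF G] amp z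
        by (rule ifmul)
    qed
    show "let V' = {v \<in> V. c v}; E' = {e \<in> E. e \<subseteq> V'};
            q = (\<lambda>v. outq Alg (iview V E c v, fst (run Alg V E c \<omega> 2) v) (\<omega> 2 v));
            \<psi> = snd (run Alg V E c \<omega> (Suc 2))
        in inj_on q V' \<and>
           (\<forall>v\<in>V'. q v \<in> owned Alg (iview V E c v) (fst (run Alg V E c \<omega> 2) v)) \<and>
           (\<exists>\<phi>. \<forall>b. \<psi> b = graph_state_amp V' E' (\<lambda>v. b (q v)) * \<phi> (\<lambda>p. p \<notin> q ` V' \<and> b p))"
      unfolding Let_def q img
    proof (intro conjI)
      show "\<exists>\<phi>. \<forall>b. snd (run Alg V E c \<omega> (Suc 2)) b =
       graph_state_amp {v \<in> V. c v} {e \<in> E. e \<subseteq> {v \<in> V. c v}} (\<lambda>v. b (v, 0)) * \<phi> (\<lambda>p. p \<notin> ?Q \<and> b p)"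
        by (rule exI[of _ ?\<phi>]) (rule st)
    qed (rule inj, rule own)
  qed
qed

end
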